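(* Let $T_1=(Q_1,\Sigma,\Delta,R_1,q_1^0)$ and $T_2=(Q_2,\Delta,\Omega,R_2,q_2^0)$ be top-down tree transducers, let $A$ be the domain automaton of $T_2$, and let $\hat{T}_1$ be the product construction of $T_1$ and $A$. Let $s\in T_\Sigma$ and let $t$ be producible by the state $q_1$ of $T_1$ on input $s$. Let $S\subseteq Q_2$ be such that $t\in\bigcap_{q\in S}\text{dom}(q)$. Then $t$ is producible by the state $(q_1,S)$ of $\hat{T}_1$ on input $s$.
   Context: A top-down tree transducer $T=(Q,\Sigma,\Delta,R,q_0)$ has finite state set $Q$, ranked input/output alphabets $\Sigma,\Delta$, initial state $q_0$, and finite rule set $R$ of rules $q(a(x_1,\dots,x_k))\to t$ with $a\in\Sigma_k$ ($\Sigma_k$ = symbols of rank $k$) and $t$ a tree over $\Delta$ whose leaves may additionally be of the form $q'(x_i)$, $q'\in Q$, $i\in[k]$; rules are used as rewrite rules in the usual way. A state $q$ produces $t$ on input $s$ if the tree $t$ over $\Delta$ is derivable from $q(s)$; $\text{dom}(q)$ is the set of inputs on which $q$ produces some tree (an empty intersection of domains is the set of all trees). For $q\in Q$, $a\in\Sigma_k$, $\text{rhs}_T(q,a)$ is the set of right-hand sides of rules with left-hand side $q(a(x_1,\dots,x_k))$; for a set $\Gamma$ of right-hand sides, $\Gamma[x_i]$ is the set of $q'\in Q$ with $q'(x_i)$ occurring in some tree of $\Gamma$. Domain automaton of $T$: the top-down tree automaton (transducer over $\Sigma$ with rules of the form $p(a(x_1,\dots,x_k))\to a(p_1(x_1),\dots,p_k(x_k))$)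 with states all subsets of $Q$, initial state $\{q_0\}$, rules $S(a(x_1,\dots,x_k))\to a(S_1(x_1),\dots,S_k(x_k))$ for every $a\in\Sigma_k$, nonempty $S=\{q_1,\dots,q_n\}\subseteq Q$ and nonempty $\Gamma_j\subseteq\text{rhs}_T(q_j,a)$ ($j\in[n]$), where $S_i=\bigcup_j\Gamma_j[x_i]$, and rules $\emptyset(a(x_1,\dots,x_k))\to a(\emptyset(x_1),\dots,\emptyset(x_k))$ for all $a$. Product construction of transducers $T=(Q,\Sigma,\Delta,R,q_0)$ and $T'=(Q',\Delta,\Omega,R',q'_0)$: the transducer with states $Q\times Q'$, input $\Sigma$, output $\Omega$, initial state $(q_0,q'_0)$, and, for every rule $q(a(x_1,\dots,x_k))\to\xi$ of $T$, every $p\in Q'$ and every tree $\zeta$ derivable from $p(\xi)$ using rules of $T'$ in which the leaves of $\xi$ of the form $q''(x_i)$ are treated as unrewritable symbols and a state $p'$ applied to such a leaf stays as $p'(q''(x_i))$, the rule $(q,p)(a(x_1,\dots,x_k))\to\zeta'$, where $\zeta'$ is obtained from $\zeta$ by replacing each $p'(q''(x_i))$ by $(q'',p')(x_i)$. *)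

theory Defs
  imports Main
begin

(* Trees over a ranked alphabet, possibly with variable leaves.
   A ranked alphabet is a set of pairs (symbol, rank); a node Nd a ts is
   well-ranked iff (a, length ts) is in the alphabet. *)
datatype (syms_tr: 'f, vars_tr: 'v) tr = Var 'v | Nd 'f "('f,'v) tr list"

datatype 'f gtree = GNd 'f "'f gtree list"

fun to_tr :: "'f gtree \<Rightarrow> ('f,'v) tr" where
  "to_tr (GNd a ts) = Nd a (map to_tr ts)"

fun wf_gtree :: "('f \<times> nat) set \<Rightarrow> 'f gtree \<Rightarrow> bool" where
  "wf_gtree \<Sigma> (GNd a ts) \<longleftrightarrow> (a, length ts) \<in> \<Sigma> \<and> (\<forall>t\<in>set ts. wf_gtree \<Sigma> t)"

fun wf_tr :: "('f \<times> nat) set \<Rightarrow> ('f,'v) tr \<Rightarrow> bool" where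
  "wf_tr \<Sigma> (Var v) \<longleftrightarrow> True"
| "wf_tr \<Sigma> (Nd a ts) \<longleftrightarrow> (a, length ts) \<in> \<Sigma> \<and> (\<forall>t\<in>set ts. wf_tr \<Sigma> t)"

(* A rule (q, a, k, r) stands for q(a(x_1,...,x_k)) -> r, where r is a tree
   over Delta whose leaves may be Var (q', i), standing for q'(x_i), 1 <= i <= k. *)
record ('q,'f,'g) tdtt =
  states :: "'q set"
  inp    :: "('f \<times> nat) set"
  outp   :: "('g \<times> nat) set"
  rules  :: "('q \<times> 'f \<times> nat \<times> ('g, 'q \<times> nat) tr) set"
  init   :: 'q

definition wf_tdtt :: "('q,'f,'g) tdtt \<Rightarrow> bool" where
  "wf_tdtt T \<longleftrightarrow> finite (states T) \<and> finite (inp T) \<and> finite (outp T)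
     \<and> finite (rules T) \<and> init T \<in> states T
     \<and> (\<forall>(q,a,k,r)\<in>rules T. q \<in> states T \<and> (a,k) \<in> inp T \<and> wf_tr (outp T) r
          \<and> (\<forall>(q',i)\<in>vars_tr r. q' \<in> states T \<and> 1 \<le> i \<and> i \<le> k))"

(* Variable leaves v of the input are treated as
   unrewritable symbols: a state q applied to such a leaf stays as q(v),
   represented by Var (q, v) in the output. Each occurrence of q'(x_i) in a
   right-hand side is rewritten independently. *)
inductive derives :: "('q,'f,'g) tdtt \<Rightarrow> 'q \<Rightarrow> ('f,'v) tr \<Rightarrow> ('g, 'q \<times> 'v) tr \<Rightarrow> bool"
  and inst :: "('q,'f,'g) tdtt \<Rightarrow> ('f,'v) tr list \<Rightarrow> ('g, 'q \<times> nat) tr \<Rightarrow> ('g, 'q \<times> 'v) tr \<Rightarrow> bool"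
  for T :: "('q,'f,'g) tdtt" where
  derives_var: "derives T q (Var v) (Var (q, v))"
| derives_rule: "(q, a, length ss, r) \<in> rules T \<Longrightarrow> inst T ss r t \<Longrightarrow> derives T q (Nd a ss) t"
| inst_node: "list_all2 (inst T ss) rs ts \<Longrightarrow> inst T ss (Nd g rs) (Nd g ts)"
| inst_var: "1 \<le> i \<Longrightarrow> i \<le> length ss \<Longrightarrow> derives T q' (ss ! (i - 1)) t \<Longrightarrow> inst T ss (Var (q', i)) t"

definition produces :: "('q,'f,'g) tdtt \<Rightarrow> 'q \<Rightarrow> 'f gtree \<Rightarrow> 'g gtree \<Rightarrow> bool" where
  "produces T q s t \<longleftrightarrow> derives T q (to_tr s :: ('f, unit) tr) (to_tr t)"

definition dom_st :: "('q,'f,'g) tdtt \<Rightarrow> 'q \<Rightarrow> 'f gtree set" where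
  "dom_st T q = {s. \<exists>t. produces T q s t}"

definition rhs_set :: "('q,'f,'g) tdtt \<Rightarrow> 'q \<Rightarrow> 'f \<Rightarrow> nat \<Rightarrow> ('g, 'q \<times> nat) tr set" where
  "rhs_set T q a k = {r. (q, a, k, r) \<in> rules T}"

definition states_at :: "('g, 'q \<times> nat) tr set \<Rightarrow> nat \<Rightarrow> 'q set" where
  "states_at \<Gamma> i = {q'. \<exists>r\<in>\<Gamma>. (q', i) \<in> vars_tr r}"

definition dom_aut :: "('q,'f,'g) tdtt \<Rightarrow> ('q set, 'f, 'f) tdtt" where
  "dom_aut T = \<lparr> states = Pow (states T), inp = inp T, outp = inp T,
     rules =
       {(S, a, k, Nd a (map (\<lambda>i. Var (\<Union>q\<in>S. states_at (\<Gamma> q) i, i)) [1..<k+1])) | S a k \<Gamma>.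
          (a, k) \<in> inp T \<and> S \<noteq> {} \<and> S \<subseteq> states T
          \<and> (\<forall>q\<in>S. \<Gamma> q \<noteq> {} \<and> \<Gamma> q \<subseteq> rhs_set T q a k)}
       \<union> {({}, a, k, Nd a (map (\<lambda>i. Var ({}, i)) [1..<k+1])) | a k. (a, k) \<in> inp T},
     init = {init T} \<rparr>"

definition prod_tt :: "('q,'f,'g) tdtt \<Rightarrow> ('p,'g,'h) tdtt \<Rightarrow> ('q \<times> 'p, 'f, 'h) tdtt" where
  "prod_tt T T' = \<lparr> states = states T \<times> states T', inp = inp T, outp = outp T',
     rules = {((q, p), a, k, map_tr id (\<lambda>(p', (q'', i)). ((q'', p'), i)) \<zeta>) | q a k \<xi> p \<zeta>.
                (q, a, k, \<xi>) \<in> rules T \<and> p \<in> states T' \<and> derives T' p \<xi> \<zeta>},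
     init = (init T, init T') \<rparr>"

end

theory Submission
  imports Defs
begin

lemma ground_out:
  "derives T q x out \<Longrightarrow> (\<exists>s. x = to_tr s) \<Longrightarrow> (\<exists>u. out = to_tr u)"
  "inst T xs r out \<Longrightarrow> (\<forall>x\<in>set xs. \<exists>s. x = to_tr s) \<Longrightarrow> (\<exists>u. out = to_tr u)"
proof (induction rule: derives_inst.inducts)
  case (derives_var q v)
  then show ?case by (metis to_tr.elims tr.distinct(1))
next
  case (derives_rule q a ss r t)
  then obtain s where "Nd a ss = to_tr s" by blast
  then obtain us where "ss = map to_tr us" by (cases s) simp
  then have "\<forall>x\<in>set ss. \<exists>s. x = to_tr s" by (simp add: image_iff) (intro ballI exI, rule refl)
  then show ?case using derives_rule.IH by blast
next
  case (inst_node ss rs ts g)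
  have "\<forall>t\<in>set ts. \<exists>u. t = to_tr u"
    using inst_node by (auto simp: list_all2_conv_all_nth in_set_conv_nth)
  have "ts = map to_tr (map (\<lambda>t. SOME u. t = to_tr u) ts)"
    unfolding map_map
  proof (rule sym, rule map_idI)
    fix t assume "t \<in> set ts"
    then have "\<exists>u. t = to_tr u" using \<open>\<forall>t\<in>set ts. \<exists>u. t = to_tr u\<close> by blast
    then have "t = to_tr (SOME u. t = to_tr u)" by (rule someI_ex)
    then show "(to_tr \<circ> (\<lambda>t. SOME u. t = to_tr u)) t = t" by simp
  qed
  then show ?case by (metis to_tr.simps)
next
  case (inst_var i ss q' t)
  then have "ss ! (i - 1) \<in> set ss" by (intro nth_mem) simp
  then show ?case using inst_var by blast
qed

lemma vars_inst:
  "inst T xs r out \<Longrightarrow> (q', i) \<in> vars_tr r \<Longrightarrow> \<exists>u. derives T q' (xs ! (i - 1)) u \<and> 1 \<le> i \<and> i \<le> length xs"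
proof (induction r arbitrary: out)
  case (Var v)
  then show ?case by (auto elim!: inst.cases[of T xs "Var (q', i)"])
next
  case (Nd g rs)
  from Nd.prems(1) obtain ts where "list_all2 (inst T xs) rs ts" by (auto elim: inst.cases)
  moreover from Nd.prems(2) obtain r where "r \<in> set rs" "(q', i) \<in> vars_tr r" by auto
  ultimately show ?case using Nd.IH by (metis in_set_conv_nth list_all2_conv_all_nth)
qed

lemma derives_Nd_inv:
  "derives T q (Nd a ss) out \<Longrightarrow> \<exists>r. (q, a, length ss, r) \<in> rules T \<and> inst T ss r out"
  by (auto elim: derives.cases)


declare upt_Suc[simp del]

lemma inner:
  fixes T1 :: "('q1,'f,'g) tdtt" and T2 :: "('q2,'g,'h) tdtt" and xs :: "('f, unit) tr list"
  assumes wf2: "wf_tdtt T2"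
  and H: "\<And>i q'' u p'. 1 \<le> i \<Longrightarrow> i \<le> length xs \<Longrightarrow> derives T1 q'' (xs!(i-1)) (to_tr u)
     \<Longrightarrow> p' \<subseteq> states T2 \<Longrightarrow> \<forall>q\<in>p'. u \<in> dom_st T2 q
     \<Longrightarrow> derives (prod_tt T1 (dom_aut T2)) (q'',p') (xs!(i-1)) (to_tr u)"
  shows "inst T1 xs \<xi> (to_tr t) \<Longrightarrow> wf_tr (inp T2) \<xi> \<Longrightarrow> S \<subseteq> states T2 \<Longrightarrow> \<forall>q\<in>S. t \<in> dom_st T2 q
    \<Longrightarrow> \<exists>\<zeta>. derives (dom_aut T2) S \<xi> \<zeta> \<and>
         inst (prod_tt T1 (dom_aut T2)) xs (map_tr id (\<lambda>(p', (q'', i)). ((q'', p'), i)) \<zeta>) (to_tr t)"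
proof (induction \<xi> arbitrary: t S)
  case (Var v)
  obtain q'' i where v: "v = (q'',i)" by force
  from Var.prems(1) have i: "1 \<le> i" "i \<le> length xs" and d: "derives T1 q'' (xs!(i-1)) (to_tr t)"
    unfolding v by (auto elim!: inst.cases[of T1 xs "Var (q'', i)"])
  have "derives (dom_aut T2) S (Var (q'',i)) (Var (S,(q'',i)))" by (rule derives_var)
  moreover have "inst (prod_tt T1 (dom_aut T2)) xs (Var ((q'',S),i)) (to_tr t)"
    by (rule inst_var[OF i H[OF i d Var.prems(3,4)]])
  ultimately show ?case unfolding v by (intro exI[of _ "Var (S,(q'',i))"]) simp
next
  case (Nd g rs)
  let ?k = "length rs"
  let ?A = "dom_aut T2"
  let ?P = "prod_tt T1 (dom_aut T2)"
  let ?F = "(\<lambda>(p', (q'', i)). ((q'', p'), i)) :: 'q2 set \<times> ('q1 \<times> nat) \<Rightarrow> ('q1 \<times> 'q2 set) \<times> nat"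
  from Nd.prems(1) obtain ts where ts: "to_tr t = Nd g ts" "list_all2 (inst T1 xs) rs ts"
    by (auto elim: inst.cases[of T1 xs "Nd g rs"])
  obtain a us where t: "t = GNd a us" by (cases t)
  with ts(1) have a: "a = g" and ts_eq: "ts = map to_tr us" by auto
  have len: "length us = ?k" using ts(2) ts_eq list_all2_lengthD by fastforce
  have gk: "(g, ?k) \<in> inp T2" using Nd.prems(2) by simp
  have gen: "\<exists>\<zeta>. derives ?A S (Nd g rs) \<zeta> \<and> inst ?P xs (map_tr id ?F \<zeta>) (to_tr t)"
    if R: "(S, g, ?k, Nd g (map (\<lambda>i. Var (C i, i)) [1..<?k+1])) \<in> rules ?A"
    and Ci: "\<And>i. 1 \<le> i \<Longrightarrow> i \<le> ?k \<Longrightarrow> C i \<subseteq> states T2 \<and> (\<forall>q\<in>C i. us!(i-1) \<in> dom_st T2 q)"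
    for C
  proof -
    have ex: "\<forall>j<?k. \<exists>\<zeta>. derives ?A (C (Suc j)) (rs!j) \<zeta> \<and> inst ?P xs (map_tr id ?F \<zeta>) (to_tr (us!j))"
    proof (intro allI impI)
      fix j assume j: "j < ?k"
      have "rs!j \<in> set rs" using j by simp
      moreover have "inst T1 xs (rs!j) (to_tr (us!j))"
        using ts(2) ts_eq j len by (simp add: list_all2_conv_all_nth)
      moreover have "wf_tr (inp T2) (rs!j)" using Nd.prems(2) j by simp
      moreover have "C (Suc j) \<subseteq> states T2" "\<forall>q\<in>C (Suc j). us!j \<in> dom_st T2 q"
        using Ci[of "Suc j"] j by auto
      ultimately show "\<exists>\<zeta>. derives ?A (C (Suc j)) (rs!j) \<zeta> \<and> inst ?P xs (map_tr id ?F \<zeta>) (to_tr (us!j))"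
        using Nd.IH by blast
    qed
    define zs where "zs = map (\<lambda>j. SOME \<zeta>. derives ?A (C (Suc j)) (rs!j) \<zeta> \<and> inst ?P xs (map_tr id ?F \<zeta>) (to_tr (us!j))) [0..<?k]"
    have lz: "length zs = ?k" unfolding zs_def by simp
    have zs: "derives ?A (C (Suc j)) (rs!j) (zs!j) \<and> inst ?P xs (map_tr id ?F (zs!j)) (to_tr (us!j))"
      if j: "j < ?k" for j
    proof -
      have "zs!j = (SOME \<zeta>. derives ?A (C (Suc j)) (rs!j) \<zeta> \<and> inst ?P xs (map_tr id ?F \<zeta>) (to_tr (us!j)))"
        unfolding zs_def using j by simp
      then show ?thesis using someI_ex[OF ex[rule_format, OF j]] by simp
    qed
    have "inst ?A rs (Nd g (map (\<lambda>i. Var (C i, i)) [1..<?k+1])) (Nd g zs)"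
    proof (rule inst_node, unfold list_all2_conv_all_nth, intro conjI allI impI)
      show "length (map (\<lambda>i. Var (C i, i)) [1..<?k+1]) = length zs" unfolding length_map length_upt using lz by simp
      fix j assume "j < length (map (\<lambda>i. Var (C i, i)) [1..<?k+1])"
      then have j: "j < ?k" by simp
      have "inst ?A rs (Var (C (Suc j), Suc j)) (zs!j)"
        by (rule inst_var) (use j zs[OF j] in auto)
      then show "inst ?A rs (map (\<lambda>i. Var (C i, i)) [1..<?k+1] ! j) (zs ! j)"
        using j by (simp add: nth_upt)
    qed
    then have "derives ?A S (Nd g rs) (Nd g zs)" by (rule derives_rule[OF R])
    moreover have "inst ?P xs (map_tr id ?F (Nd g zs)) (to_tr t)"
      unfolding t a using zs lz len
      by (auto intro!: inst_node simp: list_all2_conv_all_nth)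
    ultimately show ?thesis by blast
  qed
  show ?case
  proof (cases "S = {}")
    case True
    have R: "(S, g, ?k, Nd g (map (\<lambda>i. Var ((\<lambda>i. {}) i, i)) [1..<?k+1])) \<in> rules ?A"
      using True gk unfolding dom_aut_def by simp
    show ?thesis using True by (rule_tac gen[OF R]) auto
  next
    case False
    let ?us = "map to_tr us :: ('g, unit) tr list"
    define R where "R q = (SOME r. (q,g,?k,r) \<in> rules T2 \<and> (\<exists>out. inst T2 ?us r out))" for q
    have Rq: "(q,g,?k,R q) \<in> rules T2 \<and> (\<exists>out. inst T2 ?us (R q) out)" if "q \<in> S" for q
    proof -
      from Nd.prems(4) that obtain out where "produces T2 q t out" unfolding dom_st_def by blast
      then have "derives T2 q (Nd g ?us) (to_tr out)" unfolding produces_def t a by simp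
      from derives_Nd_inv[OF this] have "\<exists>r. (q,g,?k,r) \<in> rules T2 \<and> (\<exists>out. inst T2 ?us r out)"
        using len by auto
      then show ?thesis unfolding R_def by (rule someI_ex)
    qed
    let ?C = "\<lambda>i. \<Union>q\<in>S. states_at ((\<lambda>q. {R q}) q) i"
    have R: "(S, g, ?k, Nd g (map (\<lambda>i. Var (?C i, i)) [1..<?k+1])) \<in> rules ?A"
      unfolding dom_aut_def using False gk Nd.prems(3) Rq
      by (simp add: rhs_set_def) (rule exI[of _ "\<lambda>q. {R q}"], auto)
    show ?thesis
    proof (rule gen[OF R])
      fix i assume i: "1 \<le> i" "i \<le> ?k"
      show "?C i \<subseteq> states T2 \<and> (\<forall>q\<in>?C i. us!(i-1) \<in> dom_st T2 q)"
      proof (intro conjI subsetI ballI)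
        fix q' assume "q' \<in> ?C i"
        then obtain q where q: "q \<in> S" and v: "(q', i) \<in> vars_tr (R q)"
          unfolding states_at_def by auto
        from Rq[OF q] have rule: "(q,g,?k,R q) \<in> rules T2" and "\<exists>out. inst T2 ?us (R q) out" by auto
        then obtain out where o: "inst T2 ?us (R q) out" by blast
        show "q' \<in> states T2" using wf2 rule v unfolding wf_tdtt_def by fastforce
        from vars_inst[OF o v] obtain u where "derives T2 q' (?us ! (i - 1)) u" by blast
        then have d: "derives T2 q' (to_tr (us ! (i - 1))) u" using i len by simp
        then obtain w where "u = to_tr w" using ground_out(1)[OF d] by blast
        with d show "us!(i-1) \<in> dom_st T2 q'" unfolding dom_st_def produces_def by blast
      qed
    qed
  qed
qed


lemma outer:
  fixes T1 :: "('q1,'f,'g) tdtt" and T2 :: "('q2,'g,'h) tdtt"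
  assumes wf1: "wf_tdtt T1" and wf2: "wf_tdtt T2" and io: "outp T1 = inp T2"
  shows "derives T1 q (to_tr s :: ('f, unit) tr) (to_tr t) \<Longrightarrow> S \<subseteq> states T2 \<Longrightarrow> \<forall>q\<in>S. t \<in> dom_st T2 q
    \<Longrightarrow> derives (prod_tt T1 (dom_aut T2)) (q, S) (to_tr s :: ('f, unit) tr) (to_tr t)"
proof (induction s arbitrary: q t S)
  case (GNd a ss)
  let ?xs = "map to_tr ss :: ('f, unit) tr list"
  from GNd.prems(1) have "derives T1 q (Nd a ?xs) (to_tr t)" by simp
  from derives_Nd_inv[OF this] obtain \<xi> where
    r: "(q, a, length ss, \<xi>) \<in> rules T1" and i: "inst T1 ?xs \<xi> (to_tr t)" by auto
  have wfx: "wf_tr (inp T2) \<xi>" using wf1 r io unfolding wf_tdtt_def by fastforce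
  have H: "derives (prod_tt T1 (dom_aut T2)) (q'',p') (?xs!(i-1)) (to_tr u)"
    if "1 \<le> i" "i \<le> length ?xs" "derives T1 q'' (?xs!(i-1)) (to_tr u)"
       "p' \<subseteq> states T2" "\<forall>q\<in>p'. u \<in> dom_st T2 q" for i q'' u p'
  proof -
    have "ss!(i-1) \<in> set ss" using that(1,2) by simp
    moreover have "?xs!(i-1) = to_tr (ss!(i-1))" using that(1,2) by simp
    ultimately show ?thesis using GNd.IH[of "ss!(i-1)" q'' u p'] that(3-5) by simp
  qed
  obtain \<zeta> where z: "derives (dom_aut T2) S \<xi> \<zeta>"
    "inst (prod_tt T1 (dom_aut T2)) ?xs (map_tr id (\<lambda>(p', (q'', i)). ((q'', p'), i)) \<zeta>) (to_tr t)"
    using inner[OF wf2 H i wfx GNd.prems(2,3)] by blast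
  have "((q, S), a, length ?xs, map_tr id (\<lambda>(p', (q'', i)). ((q'', p'), i)) \<zeta>) \<in> rules (prod_tt T1 (dom_aut T2))"
    unfolding prod_tt_def using r z(1) GNd.prems(2)
    by (simp add: dom_aut_def) blast
  from derives_rule[OF this z(2)] show ?case by simp
qed

theorem lemma13:
  fixes T1 :: "('q1, 'f, 'g) tdtt" and T2 :: "('q2, 'g, 'h) tdtt"
  assumes "wf_tdtt T1" and "wf_tdtt T2" and "outp T1 = inp T2"
    and "wf_gtree (inp T1) s"
    and "q1 \<in> states T1"
    and "produces T1 q1 s t"
    and "S \<subseteq> states T2"
    and "\<forall>q\<in>S. t \<in> dom_st T2 q"
  shows "produces (prod_tt T1 (dom_aut T2)) (q1, S) s t"
  using outer[OF assms(1-3)] assms(6-8) unfolding produces_def by blast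

end
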